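(* Let $r\ge2$ and fix $\tilde{\mathbf z}=(z_2,\dots,z_r)^\intercal\in\Omega^{r-1}$. For any $2\le j\le r$, any non-negative integer $k$ and any $t\in\mathbb C_\infty$ with $|t|_\infty\le1$, \[\lim_{|z_1|_\infty=|\mathbf z|_i\to\infty}\sum'_{a_1,\dots,a_r\in A}\frac{a_j(t)}{(a_1z_1+\dots+a_rz_r)^{q^k}}=\sum'_{a_2,\dots,a_r\in A}\frac{a_j(t)}{(a_2z_2+\dots+a_rz_r)^{q^k}}.\]
   Context: Let $q$ be a prime power, $A=\mathbb F_q[\theta]$, $|\theta|_\infty=q$, $K_\infty=\mathbb F_q((1/\theta))$, $\mathbb C_\infty$ the completion of an algebraic closure of $K_\infty$; $a(t)$ is $a\in A$ with $\theta$ replaced by $t$. For $n\ge1$, $\Omega^n$ is the set of $(z_1,\dots,z_n)^\intercal\in\mathbb C_\infty^n$ with $K_\infty$-linearly independent entries and $z_n=1$. Here $\mathbf z=(z_1,\tilde{\mathbf z})=(z_1,z_2,\dots,z_r)^\intercal\in\Omega^r$, $|\mathbf z|_i=\inf\{|z_1-\alpha|_\infty:\alpha\in K_\infty z_2+\dots+K_\infty z_r\}$, and the limit is taken as $z_1$ varies (with $\tilde{\mathbf z}$ fixed, $\mathbf z\in\Omega^r$) subject to $|z_1|_\infty=|\mathbf z|_i$ and $|z_1|_\infty\to\infty$. $\sum'$ excludes the tuple with all entries zero. *)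

theory Defs
  imports "HOL-Computational_Algebra.Computational_Algebra"
begin

text \<open>We work in an arbitrary field 'c equipped with a function absv, and impose
  conditions that characterise (C_infinity, |.|_infinity) up to isomorphism:
  a complete, algebraically closed, non-archimedean valued field of characteristic p
  containing theta with absv theta = q, in which the elements algebraic over
  K_infinity (the closure of F_q(theta)) are dense.\<close>

definition Fq :: "nat \<Rightarrow> 'c::field set" where
  "Fq q = {x. x ^ q = x}"

text \<open>A = F_q[theta], represented by polynomials with coefficients in F_q;
  a(theta) is poly a theta and a(t) is poly a t.\<close>
definition Apoly :: "nat \<Rightarrow> 'c::field poly set" where
  "Apoly q = {a. \<forall>i. coeff a i \<in> Fq q}"

definition Fq_theta :: "nat \<Rightarrow> 'c::field \<Rightarrow> 'c set" where
  "Fq_theta q \<theta> = {poly a \<theta> / poly b \<theta> | a b. a \<in> Apoly q \<and> b \<in> Apoly q \<and> b \<noteq> 0}"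

definition Kinf :: "('c::field \<Rightarrow> real) \<Rightarrow> nat \<Rightarrow> 'c \<Rightarrow> 'c set" where
  "Kinf absv q \<theta> = {x. \<forall>\<epsilon>>0. \<exists>y\<in>Fq_theta q \<theta>. absv (x - y) < \<epsilon>}"

definition algebraic_over :: "'c::field set \<Rightarrow> 'c \<Rightarrow> bool" where
  "algebraic_over K x \<longleftrightarrow> (\<exists>P. P \<noteq> 0 \<and> (\<forall>i. coeff P i \<in> K) \<and> poly P x = 0)"

definition Cinf_setup :: "nat \<Rightarrow> 'c::field \<Rightarrow> ('c \<Rightarrow> real) \<Rightarrow> bool" where
  "Cinf_setup q \<theta> absv \<longleftrightarrow>
     (\<exists>p n. prime p \<and> n > 0 \<and> q = p ^ n \<and> of_nat p = (0::'c)) \<and>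
     (\<forall>x. absv x \<ge> 0) \<and> (\<forall>x. absv x = 0 \<longleftrightarrow> x = 0) \<and>
     (\<forall>x y. absv (x * y) = absv x * absv y) \<and>
     (\<forall>x y. absv (x + y) \<le> max (absv x) (absv y)) \<and>
     absv \<theta> = real q \<and>
     (\<forall>X::nat \<Rightarrow> 'c. (\<forall>\<epsilon>>0. \<exists>N. \<forall>m\<ge>N. \<forall>n\<ge>N. absv (X m - X n) < \<epsilon>)
          \<longrightarrow> (\<exists>L. \<forall>\<epsilon>>0. \<exists>N. \<forall>n\<ge>N. absv (X n - L) < \<epsilon>)) \<and>
     (\<forall>P::'c poly. degree P > 0 \<longrightarrow> (\<exists>x. poly P x = 0)) \<and>
     (\<forall>x. \<forall>\<epsilon>>0. \<exists>y. algebraic_over (Kinf absv q \<theta>) y \<and> absv (x - y) < \<epsilon>)"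

definition lin_indep_over :: "'c::field set \<Rightarrow> nat set \<Rightarrow> (nat \<Rightarrow> 'c) \<Rightarrow> bool" where
  "lin_indep_over K I v \<longleftrightarrow>
     (\<forall>c. (\<forall>i\<in>I. c i \<in> K) \<longrightarrow> (\<Sum>i\<in>I. c i * v i) = 0 \<longrightarrow> (\<forall>i\<in>I. c i = 0))"

definition imag_abs :: "('c::field \<Rightarrow> real) \<Rightarrow> 'c set \<Rightarrow> nat \<Rightarrow> 'c \<Rightarrow> (nat \<Rightarrow> 'c) \<Rightarrow> real" where
  "imag_abs absv K r z1 zt =
     Inf {absv (z1 - (\<Sum>i\<in>{2..r}. c i * zt i)) | c. \<forall>i\<in>{2..r}. c i \<in> K}"

definition abs_has_sum :: "('c::field \<Rightarrow> real) \<Rightarrow> ('b \<Rightarrow> 'c) \<Rightarrow> 'b set \<Rightarrow> 'c \<Rightarrow> bool" where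
  "abs_has_sum absv f S s \<longleftrightarrow>
     (\<forall>\<epsilon>>0. \<exists>F0. finite F0 \<and> F0 \<subseteq> S \<and>
        (\<forall>F. finite F \<and> F0 \<subseteq> F \<and> F \<subseteq> S \<longrightarrow> absv (sum f F - s) < \<epsilon>))"

definition abs_infsum :: "('c::field \<Rightarrow> real) \<Rightarrow> ('b \<Rightarrow> 'c) \<Rightarrow> 'b set \<Rightarrow> 'c" where
  "abs_infsum absv f S = (THE s. abs_has_sum absv f S s)"

definition tuples :: "nat \<Rightarrow> nat set \<Rightarrow> (nat \<Rightarrow> 'c::field poly) set" where
  "tuples q I = {a. (\<forall>i\<in>I. a i \<in> Apoly q) \<and> (\<forall>i. i \<notin> I \<longrightarrow> a i = 0) \<and> (\<exists>i\<in>I. a i \<noteq> 0)}"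

end

theory Submission imports Defs begin

locale cinf =
  fixes q :: nat and \<theta> :: "'c::field" and absv :: "'c \<Rightarrow> real"
  assumes csetup: "Cinf_setup q \<theta> absv"
begin

lemma nonneg[simp]: "absv x \<ge> 0" using csetup by (simp add: Cinf_setup_def)
lemma zero_iff[simp]: "absv x = 0 \<longleftrightarrow> x = 0" using csetup by (simp add: Cinf_setup_def)
lemma amult[simp]: "absv (x*y) = absv x * absv y" using csetup by (simp add: Cinf_setup_def)
lemma ultra: "absv (x+y) \<le> max (absv x) (absv y)" using csetup by (simp add: Cinf_setup_def)
lemma atheta[simp]: "absv \<theta> = real q" using csetup by (simp add: Cinf_setup_def)
lemma complete: fixes X :: "nat \<Rightarrow> 'c" shows "(\<forall>\<epsilon>>0. \<exists>N. \<forall>m\<ge>N. \<forall>n\<ge>N. absv (X m - X n) < \<epsilon>)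
          \<Longrightarrow> (\<exists>L. \<forall>\<epsilon>>0. \<exists>N. \<forall>n\<ge>N. absv (X n - L) < \<epsilon>)"
  using csetup unfolding Cinf_setup_def by blast
lemma qchar: "\<exists>p n. prime p \<and> n > 0 \<and> q = p ^ n \<and> of_nat p = (0::'c)"
  using csetup unfolding Cinf_setup_def by blast

lemma azero[simp]: "absv 0 = 0" by simp

lemma apos[simp]: "absv x > 0 \<longleftrightarrow> x \<noteq> 0"
  using nonneg[of x] zero_iff[of x] by linarith

lemma aone[simp]: "absv 1 = 1"
proof -
  have "absv 1 = absv 1 * absv 1" using amult[of 1 1] by simp
  moreover have "absv 1 \<noteq> 0" by simp
  ultimately show ?thesis by simp
qed

lemma aminus[simp]: "absv (-x) = absv x"
proof -
  have "absv (-1) * absv (-1) = 1" using amult[of "-1" "-1"] by simp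
  hence "(absv (-1) - 1) * (absv (-1) + 1) = 0" by (simp add: algebra_simps)
  moreover have "absv (-1) + 1 > 0" using nonneg[of "-1"] by linarith
  ultimately have "absv (-1) = 1" by simp
  thus ?thesis using amult[of "-1" x] by simp
qed

lemma ainverse[simp]: "absv (inverse x) = inverse (absv x)"
proof (cases "x = 0")
  case False
  have "absv (inverse x) * absv x = 1" using False amult[of "inverse x" x] by simp
  hence "absv (inverse x) = inverse (absv x)" using False
    by (metis apos inverse_unique mult.commute order_less_irrefl)
  thus ?thesis .
qed simp

lemma adivide[simp]: "absv (x / y) = absv x / absv y"
  by (simp add: divide_inverse)

lemma apower[simp]: "absv (x ^ n) = absv x ^ n"
  by (induction n) auto

lemma adiff: "absv (x - y) \<le> max (absv x) (absv y)"
  using ultra[of x "-y"] by simp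

lemma adiff_sym: "absv (x - y) = absv (y - x)"
  by (metis aminus minus_diff_eq)

lemma ultra_strict: assumes "absv y < absv x" shows "absv (x + y) = absv x"
proof -
  have "absv x \<le> max (absv (x+y)) (absv y)" using ultra[of "x+y" "-y"] by simp
  hence "absv x \<le> absv (x+y)" using assms by (auto simp: max_def split: if_splits)
  thus ?thesis using ultra[of x y] assms by simp
qed

lemma asum_le: assumes "finite S" "\<And>i. i \<in> S \<Longrightarrow> absv (f i) \<le> B" "0 \<le> B"
  shows "absv (sum f S) \<le> B"
  using assms
proof (induction S rule: finite_induct)
  case (insert x F)
  hence "absv (f x) \<le> B" "absv (sum f F) \<le> B" by auto
  thus ?case using ultra[of "f x" "sum f F"] insert(1,2) by simp
qed simp

lemma asum_lt: assumes "finite S" "\<And>i. i \<in> S \<Longrightarrow> absv (f i) < B" "0 < B"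
  shows "absv (sum f S) < B"
  using assms
proof (induction S rule: finite_induct)
  case (insert x F)
  hence "absv (f x) < B" "absv (sum f F) < B" by auto
  thus ?case using ultra[of "f x" "sum f F"] insert(1,2) by simp
qed simp

lemma adiff3: "absv (x - z) \<le> max (absv (x - y)) (absv (y - z))"
  using ultra[of "x - y" "y - z"] by simp

lemma q_ge2: "q \<ge> 2"
proof -
  obtain p n where "prime p" "n > 0" "q = p ^ n" using qchar by blast
  hence "p \<ge> 2" using prime_ge_2_nat by auto
  hence "p \<le> p ^ n" using self_le_power[of p n] \<open>n > 0\<close> by auto
  thus ?thesis using \<open>q = p ^ n\<close> \<open>p \<ge> 2\<close> by linarith
qed

lemma frob: "(x + y) ^ q = x ^ q + (y::'c) ^ q"
proof -
  obtain p n where pn: "prime p" "n > 0" "q = p ^ n" "of_nat p = (0::'c)" using qchar by blast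
  have "CHAR('c) dvd p" using pn(4) of_nat_eq_0_iff_char_dvd by blast
  moreover have "CHAR('c) \<noteq> 1"
    by (metis of_nat_1 of_nat_CHAR one_neq_zero)
  ultimately have "CHAR('c) = p" using pn(1) by (metis prime_nat_iff)
  thus ?thesis using freshmans_dream'[of q n x y] pn by simp
qed


lemma q_pos: "q > 0" using q_ge2 by simp

lemma Fq_iff: "(x::'c) \<in> Fq q \<longleftrightarrow> x ^ q = x" by (simp add: Fq_def)

lemma Fq_0[simp]: "(0::'c) \<in> Fq q" using q_pos by (simp add: Fq_def)
lemma Fq_1[simp]: "(1::'c) \<in> Fq q" by (simp add: Fq_def)
lemma Fq_add: "(x::'c) \<in> Fq q \<Longrightarrow> y \<in> Fq q \<Longrightarrow> x + y \<in> Fq q"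
  using frob[of x y] by (simp add: Fq_def)
lemma Fq_mult: "(x::'c) \<in> Fq q \<Longrightarrow> y \<in> Fq q \<Longrightarrow> x * y \<in> Fq q"
  by (simp add: Fq_def power_mult_distrib)
lemma Fq_diff: assumes "(x::'c) \<in> Fq q" "y \<in> Fq q" shows "x - y \<in> Fq q"
proof -
  have "x = ((x - y) + y) ^ q" using assms by (simp only: Fq_def mem_Collect_eq diff_add_cancel)
  also have "\<dots> = (x - y) ^ q + y" using assms frob[of "x - y" y] by (simp add: Fq_def)
  finally show ?thesis by (simp add: Fq_def algebra_simps)
qed
lemma Fq_minus: "(y::'c) \<in> Fq q \<Longrightarrow> - y \<in> Fq q"
  using Fq_diff[of 0 y] by simp
lemma Fq_sum: "(\<And>i. i \<in> S \<Longrightarrow> f i \<in> Fq q) \<Longrightarrow> sum f S \<in> (Fq q :: 'c set)"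
  by (induction S rule: infinite_finite_induct) (auto intro: Fq_add)

lemma Fq_abs: assumes "(x::'c) \<in> Fq q" "x \<noteq> 0" shows "absv x = 1"
proof -
  have e: "absv x ^ q = absv x" using assms by (metis Fq_iff apower)
  have "absv x ^ q = absv x * absv x ^ (q - 1)" using q_pos
    by (metis Suc_diff_1 power_Suc)
  hence "absv x ^ (q - 1) = 1 ^ (q - 1)" using e assms by simp
  hence "absv x = 1" using q_ge2 power_eq_iff_eq_base[of "q - 1" "absv x" 1] by simp
  thus ?thesis .
qed

lemma Fq_le1: "(x::'c) \<in> Fq q \<Longrightarrow> absv x \<le> 1"
  using Fq_abs by (cases "x = 0") auto

lemma Fq_finite: "finite (Fq q :: 'c set)"
proof -
  let ?P = "monom (1::'c) q - [:0, 1:]"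
  obtain m where m: "q = Suc (Suc m)" using q_ge2 by (metis add_2_eq_Suc le_Suc_ex)
  have "coeff ?P q = 1" unfolding m by (simp add: coeff_monom)
  have "?P \<noteq> 0"
  proof
    assume "?P = 0" hence "coeff ?P q = 0" by simp
    with \<open>coeff ?P q = 1\<close> show False by simp
  qed
  hence "finite {x. poly ?P x = 0}" by (rule poly_roots_finite)
  moreover have "Fq q = {x. poly ?P x = 0}" by (auto simp: Fq_def poly_monom)
  ultimately show ?thesis by simp
qed

lemma Apoly_iff: "(a::'c poly) \<in> Apoly q \<longleftrightarrow> (\<forall>i. coeff a i \<in> Fq q)" by (simp add: Apoly_def)
lemma Apoly_0[simp]: "(0::'c poly) \<in> Apoly q" by (simp add: Apoly_def)
lemma Apoly_1[simp]: "(1::'c poly) \<in> Apoly q" by (simp add: Apoly_def coeff_1)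
lemma Apoly_add: "(a::'c poly) \<in> Apoly q \<Longrightarrow> b \<in> Apoly q \<Longrightarrow> a + b \<in> Apoly q"
  by (simp add: Apoly_def Fq_add)
lemma Apoly_diff: "(a::'c poly) \<in> Apoly q \<Longrightarrow> b \<in> Apoly q \<Longrightarrow> a - b \<in> Apoly q"
  by (simp add: Apoly_def Fq_diff)
lemma Apoly_minus: "(a::'c poly) \<in> Apoly q \<Longrightarrow> - a \<in> Apoly q"
  by (simp add: Apoly_def Fq_minus)
lemma Apoly_mult: "(a::'c poly) \<in> Apoly q \<Longrightarrow> b \<in> Apoly q \<Longrightarrow> a * b \<in> Apoly q"
  by (simp add: Apoly_def coeff_mult Fq_sum Fq_mult)
lemma Apoly_pCons: "pCons (c::'c) a \<in> Apoly q \<longleftrightarrow> c \<in> Fq q \<and> a \<in> Apoly q"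
proof
  assume h: "pCons c a \<in> Apoly q"
  have all: "\<forall>i. coeff (pCons c a) i \<in> Fq q" using h by (simp add: Apoly_iff)
  have "c \<in> Fq q" using all[rule_format, of 0] by simp
  moreover have "\<forall>i. coeff a i \<in> Fq q"
  proof
    fix i show "coeff a i \<in> Fq q" using all[rule_format, of "Suc i"] by simp
  qed
  ultimately show "c \<in> Fq q \<and> a \<in> Apoly q" by (simp add: Apoly_iff)
next
  assume "c \<in> Fq q \<and> a \<in> Apoly q"
  thus "pCons c a \<in> Apoly q" by (simp add: Apoly_iff coeff_pCons split: nat.split)
qed

lemma Apoly_abs_theta: "a \<in> Apoly q \<Longrightarrow> a \<noteq> 0 \<Longrightarrow> absv (poly a \<theta>) = real q ^ degree a"
proof (induction a rule: pCons_induct)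
  case (pCons c p)
  show ?case
  proof (cases "p = 0")
    case True
    thus ?thesis using pCons.prems Fq_abs by (auto simp: Apoly_pCons)
  next
    case False
    have ih: "absv (poly p \<theta>) = real q ^ degree p" using pCons False by (simp add: Apoly_pCons)
    have "absv c \<le> 1" using pCons.prems Fq_le1 by (simp add: Apoly_pCons)
    have A: "absv (\<theta> * poly p \<theta>) = real q ^ Suc (degree p)" using ih by simp
    have "real q ^ Suc (degree p) > 1" using q_ge2
      by (intro one_less_power) auto
    hence "absv c < absv (\<theta> * poly p \<theta>)" using A \<open>absv c \<le> 1\<close> by linarith
    hence "absv (\<theta> * poly p \<theta> + c) = real q ^ Suc (degree p)"
      using ultra_strict[of c "\<theta> * poly p \<theta>"] A by simp
    thus ?thesis using False by (simp add: add.commute)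
  qed
qed simp

lemma Apoly_theta_nz: "a \<in> Apoly q \<Longrightarrow> a \<noteq> 0 \<Longrightarrow> poly a \<theta> \<noteq> 0"
proof -
  assume "a \<in> Apoly q" "a \<noteq> 0"
  hence "absv (poly a \<theta>) > 0" using Apoly_abs_theta[of a] q_pos by simp
  thus ?thesis by simp
qed

lemma Apoly_theta_ge1: "a \<in> Apoly q \<Longrightarrow> a \<noteq> 0 \<Longrightarrow> absv (poly a \<theta>) \<ge> 1"
  using Apoly_abs_theta[of a] q_pos by simp

lemma Apoly_le1: "(a::'c poly) \<in> Apoly q \<Longrightarrow> absv t \<le> 1 \<Longrightarrow> absv (poly a t) \<le> 1"
proof (induction a rule: pCons_induct)
  case (pCons c p)
  have "absv c \<le> 1" "absv (poly p t) \<le> 1" using pCons Fq_le1 by (auto simp: Apoly_pCons)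
  hence "absv (t * poly p t) \<le> 1" using pCons.prems(2)
    by (simp add: mult_le_one)
  thus ?case using ultra[of c "t * poly p t"] \<open>absv c \<le> 1\<close> by simp
qed simp

lemma finite_coeff_bounded:
  assumes "finite F"
  shows "finite {p::'c poly. (\<forall>i. coeff p i \<in> F) \<and> (\<forall>i\<ge>d. coeff p i = 0)}"
proof (induction d)
  case 0
  have "{p::'c poly. (\<forall>i. coeff p i \<in> F) \<and> (\<forall>i\<ge>0. coeff p i = 0)} \<subseteq> {0}"
    by (auto intro: poly_eqI)
  thus ?case using finite_subset by blast
next
  case (Suc d)
  let ?S = "{p::'c poly. (\<forall>i. coeff p i \<in> F) \<and> (\<forall>i\<ge>d. coeff p i = 0)}"
  have "{p::'c poly. (\<forall>i. coeff p i \<in> F) \<and> (\<forall>i\<ge>Suc d. coeff p i = 0)} \<subseteq> (\<lambda>(c, p). pCons c p) ` (F \<times> ?S)"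
  proof
    fix p :: "'c poly" assume p: "p \<in> {p. (\<forall>i. coeff p i \<in> F) \<and> (\<forall>i\<ge>Suc d. coeff p i = 0)}"
    obtain c r where pr: "p = pCons c r" by (cases p)
    have p1: "\<forall>i. coeff p i \<in> F" and p2: "\<forall>i\<ge>Suc d. coeff p i = 0" using p by auto
    have "\<forall>i. coeff r i \<in> F"
    proof
      fix i show "coeff r i \<in> F" using p1[rule_format, of "Suc i"] pr by simp
    qed
    moreover have "\<forall>i\<ge>d. coeff r i = 0"
    proof safe
      fix i assume "d \<le> i" thus "coeff r i = 0" using p2[rule_format, of "Suc i"] pr by simp
    qed
    ultimately have "r \<in> ?S" by simp
    moreover have "c \<in> F" using p1[rule_format, of 0] pr by simp
    ultimately show "p \<in> (\<lambda>(c, p). pCons c p) ` (F \<times> ?S)" using pr by auto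
  qed
  moreover have "finite ((\<lambda>(c, p). pCons c p) ` (F \<times> ?S))" using Suc assms by auto
  ultimately show ?case using finite_subset by blast
qed

lemma Apoly_deg_finite: "finite {a \<in> (Apoly q :: 'c poly set). degree a \<le> d}"
proof -
  have "{a \<in> Apoly q. degree a \<le> d} \<subseteq> {p. (\<forall>i. coeff p i \<in> Fq q) \<and> (\<forall>i\<ge>Suc d. coeff p i = 0)}"
    by (auto simp: Apoly_def coeff_eq_0)
  thus ?thesis using finite_coeff_bounded[OF Fq_finite, of "Suc d"] finite_subset by blast
qed

lemma Apoly_abs_finite: "finite {a \<in> Apoly q. absv (poly a \<theta>) \<le> M}"
proof -
  obtain d :: nat where d: "M < real q ^ d"
    using real_arch_pow[of "real q" M] q_ge2 by auto
  have "{a \<in> Apoly q. absv (poly a \<theta>) \<le> M} \<subseteq> {a \<in> Apoly q. degree a \<le> d}"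
  proof safe
    fix a assume a: "a \<in> Apoly q" "absv (poly a \<theta>) \<le> M"
    show "degree a \<le> d"
    proof (cases "a = 0")
      case False
      hence "real q ^ degree a < real q ^ d" using Apoly_abs_theta a d by simp
      thus ?thesis using q_ge2 by (simp add: power_strict_increasing_iff)
    qed simp
  qed
  thus ?thesis using Apoly_deg_finite finite_subset by blast
qed


abbreviation "FT \<equiv> Fq_theta q \<theta>"
abbreviation "KI \<equiv> Kinf absv q \<theta>"

lemma FT_poly: "a \<in> Apoly q \<Longrightarrow> poly a \<theta> \<in> FT"
  unfolding Fq_theta_def by (rule CollectI, rule exI[of _ a], rule exI[of _ 1]) simp

lemma FT_0[simp]: "0 \<in> FT" using FT_poly[of 0] by simp
lemma FT_1[simp]: "1 \<in> FT" using FT_poly[of 1] by simp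

lemma FT_elim: assumes "x \<in> FT"
  obtains a b where "a \<in> Apoly q" "b \<in> Apoly q" "b \<noteq> 0" "x = poly a \<theta> / poly b \<theta>"
  using assms unfolding Fq_theta_def by blast

lemma FT_intro: "a \<in> Apoly q \<Longrightarrow> b \<in> Apoly q \<Longrightarrow> b \<noteq> 0 \<Longrightarrow> poly a \<theta> / poly b \<theta> \<in> FT"
  unfolding Fq_theta_def by blast

lemma FT_diff: assumes "x \<in> FT" "y \<in> FT" shows "x - y \<in> FT"
proof -
  obtain a b where ab: "a \<in> Apoly q" "b \<in> Apoly q" "b \<noteq> 0" "x = poly a \<theta> / poly b \<theta>"
    using assms(1) by (rule FT_elim)
  obtain c d where cd: "c \<in> Apoly q" "d \<in> Apoly q" "d \<noteq> 0" "y = poly c \<theta> / poly d \<theta>"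
    using assms(2) by (rule FT_elim)
  have nz: "poly b \<theta> \<noteq> 0" "poly d \<theta> \<noteq> 0" using ab cd Apoly_theta_nz by auto
  have "x - y = poly (a * d - c * b) \<theta> / poly (b * d) \<theta>"
    unfolding ab(4) cd(4) using nz by (simp add: field_simps)
  moreover have "poly (a * d - c * b) \<theta> / poly (b * d) \<theta> \<in> FT"
    by (rule FT_intro) (use ab cd in \<open>auto intro: Apoly_diff Apoly_mult\<close>)
  ultimately show ?thesis by simp
qed

lemma FT_mult: assumes "x \<in> FT" "y \<in> FT" shows "x * y \<in> FT"
proof -
  obtain a b where ab: "a \<in> Apoly q" "b \<in> Apoly q" "b \<noteq> 0" "x = poly a \<theta> / poly b \<theta>"
    using assms(1) by (rule FT_elim)
  obtain c d where cd: "c \<in> Apoly q" "d \<in> Apoly q" "d \<noteq> 0" "y = poly c \<theta> / poly d \<theta>"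
    using assms(2) by (rule FT_elim)
  have "x * y = poly (a * c) \<theta> / poly (b * d) \<theta>"
    using ab(4) cd(4) by simp
  moreover have "poly (a * c) \<theta> / poly (b * d) \<theta> \<in> FT"
    by (rule FT_intro) (use ab cd in \<open>auto intro: Apoly_mult\<close>)
  ultimately show ?thesis by simp
qed

lemma FT_inverse: assumes "x \<in> FT" shows "inverse x \<in> FT"
proof -
  obtain a b where ab: "a \<in> Apoly q" "b \<in> Apoly q" "b \<noteq> 0" "x = poly a \<theta> / poly b \<theta>"
    using assms(1) by (rule FT_elim)
  show ?thesis
  proof (cases "a = 0")
    case True thus ?thesis using ab by simp
  next
    case False
    have "inverse x = poly b \<theta> / poly a \<theta>" using ab(4) by simp
    moreover have "poly b \<theta> / poly a \<theta> \<in> FT" using ab False by (intro FT_intro)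
    ultimately show ?thesis by simp
  qed
qed

lemma KI_iff: "x \<in> KI \<longleftrightarrow> (\<forall>\<epsilon>>0. \<exists>y\<in>FT. absv (x - y) < \<epsilon>)"
  by (simp add: Kinf_def)

lemma FT_KI: "x \<in> FT \<Longrightarrow> x \<in> KI"
  unfolding KI_iff by (metis azero diff_self)

lemma KI_0[simp]: "0 \<in> KI" by (rule FT_KI) simp
lemma KI_1[simp]: "1 \<in> KI" by (rule FT_KI) simp
lemma KI_poly: "a \<in> Apoly q \<Longrightarrow> poly a \<theta> \<in> KI" by (rule FT_KI, rule FT_poly)

lemma KI_closed: assumes "\<And>\<epsilon>. \<epsilon> > 0 \<Longrightarrow> \<exists>y\<in>KI. absv (x - y) < \<epsilon>" shows "x \<in> KI"
  unfolding KI_iff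
proof safe
  fix \<epsilon> :: real assume e: "\<epsilon> > 0"
  obtain y where y: "y \<in> KI" "absv (x - y) < \<epsilon>" using assms e by blast
  obtain y' where y': "y' \<in> FT" "absv (y - y') < \<epsilon>" using y(1) e unfolding KI_iff by blast
  have "absv (x - y') < \<epsilon>" using adiff3[of x y' y] y y' by simp
  thus "\<exists>y\<in>FT. absv (x - y) < \<epsilon>" using y' by blast
qed

lemma KI_diff: assumes "x \<in> KI" "y \<in> KI" shows "x - y \<in> KI"
  unfolding KI_iff
proof safe
  fix \<epsilon> :: real assume e: "\<epsilon> > 0"
  obtain x' where x': "x' \<in> FT" "absv (x - x') < \<epsilon>" using assms(1) e unfolding KI_iff by blast
  obtain y' where y': "y' \<in> FT" "absv (y - y') < \<epsilon>" using assms(2) e unfolding KI_iff by blast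
  have "absv ((x - y) - (x' - y')) = absv ((x - x') - (y - y'))" by (simp add: algebra_simps)
  also have "\<dots> < \<epsilon>" using adiff[of "x - x'" "y - y'"] x' y' by simp
  finally show "\<exists>z\<in>FT. absv (x - y - z) < \<epsilon>" using FT_diff[OF x'(1) y'(1)] by blast
qed

lemma KI_minus: "x \<in> KI \<Longrightarrow> - x \<in> KI" using KI_diff[of 0 x] by simp
lemma KI_add: "x \<in> KI \<Longrightarrow> y \<in> KI \<Longrightarrow> x + y \<in> KI" using KI_diff[of x "- y"] KI_minus[of y] by simp

lemma KI_mult: assumes "x \<in> KI" "y \<in> KI" shows "x * y \<in> KI"
  unfolding KI_iff
proof safe
  fix \<epsilon> :: real assume e: "\<epsilon> > 0"
  define D where "D = absv x + absv y + 1"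
  have D: "D > 0" "absv x \<le> D" "absv y + 1 \<le> D" unfolding D_def using nonneg[of x] nonneg[of y] by linarith+
  define \<delta> where "\<delta> = min 1 (\<epsilon> / (2 * D))"
  have d1: "\<delta> > 0" "\<delta> \<le> 1" using e D by (auto simp: \<delta>_def)
  have "\<delta> \<le> \<epsilon> / (2 * D)" by (simp add: \<delta>_def)
  hence d2: "\<delta> * (2 * D) \<le> \<epsilon>" using D by (simp add: pos_le_divide_eq)
  obtain x' where x': "x' \<in> FT" "absv (x - x') < \<delta>" using assms(1) d1 unfolding KI_iff by blast
  obtain y' where y': "y' \<in> FT" "absv (y - y') < \<delta>" using assms(2) d1 unfolding KI_iff by blast
  have "absv y' \<le> max (absv y) (absv (y - y'))"
    using adiff[of y "y - y'"] by simp
  moreover have "max (absv y) (absv (y - y')) \<le> absv y + 1" using y' d1 nonneg[of y] by linarith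
  ultimately have y'b: "absv y' \<le> absv y + 1" by linarith
  have "x * y - x' * y' = x * (y - y') + (x - x') * y'" by (simp add: algebra_simps)
  hence m: "absv (x * y - x' * y') \<le> max (absv x * absv (y - y')) (absv (x - x') * absv y')"
    using ultra[of "x * (y - y')" "(x - x') * y'"] by simp
  have "absv x * absv (y - y') \<le> D * \<delta>" using y' D by (intro mult_mono) auto
  moreover have "absv (x - x') * absv y' \<le> \<delta> * D" using x' y'b D d1
    by (intro mult_mono) auto
  moreover have "\<delta> * D < \<epsilon>"
  proof -
    have "\<delta> * D > 0" using d1 D by simp
    moreover have "\<delta> * (2 * D) = 2 * (\<delta> * D)" by simp
    ultimately show ?thesis using d2 by linarith
  qed
  ultimately have "absv (x * y - x' * y') < \<epsilon>"
    using m by (simp add: mult.commute)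
  thus "\<exists>z\<in>FT. absv (x * y - z) < \<epsilon>" using FT_mult[OF x'(1) y'(1)] by blast
qed

lemma KI_inverse: assumes "x \<in> KI" shows "inverse x \<in> KI"
proof (cases "x = 0")
  case True thus ?thesis by simp
next
  case False
  show ?thesis unfolding KI_iff
  proof safe
    fix \<epsilon> :: real assume e: "\<epsilon> > 0"
    define \<delta> where "\<delta> = min (absv x) (\<epsilon> * absv x * absv x)"
    have d: "\<delta> > 0" using e False by (simp add: \<delta>_def)
    obtain y where y: "y \<in> FT" "absv (x - y) < \<delta>" using assms d unfolding KI_iff by blast
    have "absv (y - x) < absv x" using y by (simp add: \<delta>_def adiff_sym)
    hence ay: "absv (x + (y - x)) = absv x" by (rule ultra_strict)
    hence ay': "absv y = absv x" by simp
    hence ynz: "y \<noteq> 0" using False by auto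
    have "inverse x - inverse y = (y - x) / (x * y)" using False ynz by (simp add: field_simps)
    hence "absv (inverse x - inverse y) = absv (x - y) / (absv x * absv x)"
      using ay' adiff_sym[of x y] by simp
    also have "\<dots> < \<epsilon>" using y False by (simp add: \<delta>_def field_simps)
    finally show "\<exists>z\<in>FT. absv (inverse x - z) < \<epsilon>" using FT_inverse[OF y(1)] by blast
  qed
qed

lemma KI_divide: "x \<in> KI \<Longrightarrow> y \<in> KI \<Longrightarrow> x / y \<in> KI"
  by (simp add: divide_inverse KI_mult KI_inverse)


lemma indep_subset:
  assumes "lin_indep_over KI I z" "J \<subseteq> I" "finite I"
  shows "lin_indep_over KI J z"
  unfolding lin_indep_over_def
proof (intro allI impI)
  fix c assume c: "\<forall>i\<in>J. c i \<in> KI" and s: "(\<Sum>i\<in>J. c i * z i) = 0"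
  define c' where "c' i = (if i \<in> J then c i else 0)" for i
  have "(\<Sum>i\<in>I. c' i * z i) = (\<Sum>i\<in>J. c' i * z i)"
    by (rule sum.mono_neutral_right) (use assms in \<open>auto simp: c'_def\<close>)
  also have "\<dots> = 0" using s by (simp add: c'_def)
  finally have "\<forall>i\<in>I. c' i = 0" using assms(1) c unfolding lin_indep_over_def
    by (metis KI_0 c'_def)
  show "\<forall>i\<in>J. c i = 0"
  proof
    fix i assume "i \<in> J"
    hence "i \<in> I" using assms(2) by blast
    hence "c' i = 0" using \<open>\<forall>i\<in>I. c' i = 0\<close> by blast
    thus "c i = 0" using \<open>i \<in> J\<close> by (simp add: c'_def)
  qed
qed

lemma delta_step:
  assumes J: "finite J" and i0: "i0 \<notin> J"
    and ind: "lin_indep_over KI (insert i0 J) z"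
    and C: "C > 0" "\<And>c. \<forall>i\<in>J. c i \<in> KI \<Longrightarrow> \<forall>i\<in>J. C * absv (c i) \<le> absv (\<Sum>i\<in>J. c i * z i)"
  shows "\<exists>\<delta>>0. \<forall>c. (\<forall>i\<in>J. c i \<in> KI) \<longrightarrow> \<delta> \<le> absv (z i0 + (\<Sum>i\<in>J. c i * z i))"
proof (rule ccontr)
  assume "\<not> ?thesis"
  hence "\<forall>m::nat. \<exists>c. (\<forall>i\<in>J. c i \<in> KI) \<and> absv (z i0 + (\<Sum>i\<in>J. c i * z i)) < 1 / (Suc m)"
    by (metis not_le of_nat_0_less_iff zero_less_Suc zero_less_divide_1_iff)
  then obtain cs where cs: "\<And>m. \<forall>i\<in>J. cs m i \<in> KI"
     "\<And>m. absv (z i0 + (\<Sum>i\<in>J. cs m i * z i)) < 1 / (Suc m)"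
    by metis
  define e where "e m = z i0 + (\<Sum>i\<in>J. cs m i * z i)" for m
  have eb: "absv (e m) < 1 / Suc m" for m using cs(2) by (simp add: e_def)
  have cauchy: "absv (cs m j - cs n j) < 1 / (C * Suc N)" if "j \<in> J" "m \<ge> N" "n \<ge> N" for j m n N
  proof -
    have "e m - e n = (\<Sum>i\<in>J. (cs m i - cs n i) * z i)"
      by (simp add: e_def algebra_simps sum_subtractf)
    moreover have "\<forall>i\<in>J. cs m i - cs n i \<in> KI" using cs(1) by (simp add: KI_diff)
    ultimately have "C * absv (cs m j - cs n j) \<le> absv (e m - e n)" using C(2)[of "\<lambda>i. cs m i - cs n i"] that
      by simp
    also have "\<dots> \<le> max (absv (e m)) (absv (e n))" by (rule adiff)
    also have "\<dots> < 1 / Suc N"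
    proof -
      have "1 / real (Suc m) \<le> 1 / Suc N" "1 / real (Suc n) \<le> 1 / Suc N" using that
        by (auto simp: frac_le)
      thus ?thesis using eb[of m] eb[of n] by linarith
    qed
    finally have "C * absv (cs m j - cs n j) < 1 / Suc N" .
    hence "C * absv (cs m j - cs n j) / C < (1 / Suc N) / C" using C(1) by (rule divide_strict_right_mono)
    thus ?thesis using C(1) by (simp add: mult.commute)
  qed
  have "\<forall>j\<in>J. \<exists>L. \<forall>\<epsilon>>0. \<exists>N. \<forall>n\<ge>N. absv (cs n j - L) < \<epsilon>"
  proof
    fix j assume j: "j \<in> J"
    show "\<exists>L. \<forall>\<epsilon>>0. \<exists>N. \<forall>n\<ge>N. absv (cs n j - L) < \<epsilon>"
    proof (rule complete, safe)
      fix \<epsilon> :: real assume e: "\<epsilon> > 0"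
      obtain N :: nat where N: "1 / (C * \<epsilon>) < N" using reals_Archimedean2 by blast
      have "1 / (C * Suc N) \<le> \<epsilon>"
      proof -
        have "1 / (C * \<epsilon>) < Suc N" using N by simp
        hence "1 < real (Suc N) * (C * \<epsilon>)" using C(1) e by (simp add: pos_divide_less_eq)
        moreover have "real (Suc N) * (C * \<epsilon>) = \<epsilon> * (C * real (Suc N))" by (simp add: mult_ac)
        ultimately have "1 \<le> \<epsilon> * (C * real (Suc N))" by linarith
        moreover have "C * real (Suc N) > 0" using C(1) by simp
        ultimately show ?thesis by (simp add: pos_divide_le_eq)
      qed
      thus "\<exists>N. \<forall>m\<ge>N. \<forall>n\<ge>N. absv (cs m j - cs n j) < \<epsilon>"
        using cauchy[OF j] by (meson less_le_trans)
    qed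
  qed
  then obtain Lf where Lf: "\<forall>j\<in>J. \<forall>\<epsilon>>0. \<exists>N. \<forall>n\<ge>N. absv (cs n j - Lf j) < \<epsilon>"
    by metis
  define L where "L j = (if j \<in> J then Lf j else 0)" for j
  have Lc: "\<exists>N. \<forall>n\<ge>N. absv (cs n j - L j) < \<epsilon>" if "j \<in> J" "\<epsilon> > 0" for j \<epsilon>
    using Lf that by (simp add: L_def)
  have LK: "L j \<in> KI" if jJ: "j \<in> J" for j
  proof (rule KI_closed)
    fix \<epsilon> :: real assume "\<epsilon> > 0"
    then obtain N where "\<forall>n\<ge>N. absv (cs n j - L j) < \<epsilon>" using Lc jJ by blast
    hence "absv (L j - cs N j) < \<epsilon>" using adiff_sym[of "L j" "cs N j"] by simp
    moreover have "cs N j \<in> KI" using cs(1) jJ by blast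
    ultimately show "\<exists>y\<in>KI. absv (L j - y) < \<epsilon>" by blast
  qed
  define B where "B = 1 + (\<Sum>i\<in>J. absv (z i))"
  have B: "B > 0" "\<And>i. i \<in> J \<Longrightarrow> absv (z i) \<le> B"
  proof -
    show "B > 0" unfolding B_def by (simp add: sum_nonneg add_pos_nonneg)
    fix i assume "i \<in> J"
    hence "absv (z i) \<le> (\<Sum>i\<in>J. absv (z i))" using J by (intro member_le_sum) auto
    thus "absv (z i) \<le> B" unfolding B_def by simp
  qed
  define E where "E = z i0 + (\<Sum>i\<in>J. L i * z i)"
  have "absv E < \<epsilon>" if eps: "\<epsilon> > 0" for \<epsilon>
  proof -
    have "\<forall>j\<in>J. \<forall>\<^sub>F n in sequentially. absv (cs n j - L j) < \<epsilon> / B"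
      using Lc B eps by (simp add: eventually_sequentially)
    hence "\<forall>\<^sub>F n in sequentially. \<forall>j\<in>J. absv (cs n j - L j) < \<epsilon> / B"
      by (rule eventually_ball_finite[OF J])
    then obtain N1 where N1: "\<forall>n\<ge>N1. \<forall>j\<in>J. absv (cs n j - L j) < \<epsilon> / B"
      by (auto simp: eventually_sequentially)
    obtain N2 :: nat where N2: "1 / \<epsilon> < N2" using reals_Archimedean2 by blast
    define m where "m = max N1 N2"
    have "1 / real (Suc m) < \<epsilon>"
    proof -
      have "1 / \<epsilon> < Suc m" using N2 unfolding m_def by linarith
      thus ?thesis using eps by (simp add: field_simps)
    qed
    hence em: "absv (e m) < \<epsilon>" using eb[of m] by linarith
    have "absv ((L j - cs m j) * z j) < \<epsilon>" if j: "j \<in> J" for j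
    proof -
      have "absv (L j - cs m j) < \<epsilon> / B" using N1 j adiff_sym unfolding m_def by simp
      hence "absv (L j - cs m j) * absv (z j) \<le> \<epsilon> / B * absv (z j)"
        by (intro mult_right_mono) auto
      also have "\<dots> \<le> \<epsilon> / B * B" using B j eps by (intro mult_left_mono) auto
      also have "\<dots> = \<epsilon>" using B by simp
      finally have le: "absv (L j - cs m j) * absv (z j) \<le> \<epsilon>" .
      show ?thesis
      proof (cases "z j = 0")
        case True thus ?thesis using eps by simp
      next
        case False
        hence "absv (L j - cs m j) * absv (z j) < \<epsilon> / B * absv (z j)"
          using \<open>absv (L j - cs m j) < \<epsilon> / B\<close> by (intro mult_strict_right_mono) auto
        also have "\<dots> \<le> \<epsilon> / B * B" using B j eps by (intro mult_left_mono) auto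
        also have "\<dots> = \<epsilon>" using B by simp
        finally show ?thesis by simp
      qed
    qed
    hence s: "absv (\<Sum>j\<in>J. (L j - cs m j) * z j) < \<epsilon>" using J eps by (intro asum_lt) auto
    have "E = e m + (\<Sum>j\<in>J. (L j - cs m j) * z j)"
      by (simp add: E_def e_def algebra_simps sum_subtractf)
    hence "absv E \<le> max (absv (e m)) (absv (\<Sum>j\<in>J. (L j - cs m j) * z j))"
      using ultra by simp
    thus ?thesis using em s by simp
  qed
  hence "E = 0" by (metis apos less_irrefl)
  define c' where "c' = L(i0 := 1)"
  have "(\<Sum>i\<in>insert i0 J. c' i * z i) = z i0 + (\<Sum>i\<in>J. L i * z i)"
    using J i0 by (simp add: c'_def) (intro sum.cong, auto)
  hence "(\<Sum>i\<in>insert i0 J. c' i * z i) = 0" using \<open>E = 0\<close> by (simp add: E_def)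
  moreover have "\<forall>i\<in>insert i0 J. c' i \<in> KI" using LK by (simp add: c'_def)
  ultimately have "c' i0 = 0" using ind unfolding lin_indep_over_def by blast
  thus False by (simp add: c'_def)
qed


lemma lower_bound:
  assumes "finite I" "lin_indep_over KI I z"
  shows "\<exists>C>0. \<forall>c. (\<forall>i\<in>I. c i \<in> KI) \<longrightarrow> (\<forall>i\<in>I. C * absv (c i) \<le> absv (\<Sum>i\<in>I. c i * z i))"
  using assms
proof (induction I rule: finite_psubset_induct)
  case (psubset I)
  show ?case
  proof (cases "I = {}")
    case True thus ?thesis by (intro exI[of _ 1]) auto
  next
    case False
    have "\<forall>i0\<in>I. \<exists>\<delta>>0. \<forall>c. (\<forall>i\<in>I-{i0}. c i \<in> KI) \<longrightarrow> \<delta> \<le> absv (z i0 + (\<Sum>i\<in>I-{i0}. c i * z i))"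
    proof
      fix i0 assume i0: "i0 \<in> I"
      let ?J = "I - {i0}"
      have sub: "?J \<subset> I" using i0 by blast
      have indJ: "lin_indep_over KI ?J z" using indep_subset[of I z ?J] psubset.prems psubset.hyps by blast
      obtain C where C: "C > 0" "\<forall>c. (\<forall>i\<in>?J. c i \<in> KI) \<longrightarrow> (\<forall>i\<in>?J. C * absv (c i) \<le> absv (\<Sum>i\<in>?J. c i * z i))"
        using psubset.IH[OF sub indJ] by blast
      have ins: "insert i0 ?J = I" using i0 by blast
      have fJ: "finite ?J" using psubset.hyps by simp
      show "\<exists>\<delta>>0. \<forall>c. (\<forall>i\<in>?J. c i \<in> KI) \<longrightarrow> \<delta> \<le> absv (z i0 + (\<Sum>i\<in>?J. c i * z i))"
        by (rule delta_step[OF fJ _ _ C(1)]) (use psubset.prems ins C(2) in auto)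
    qed
    then obtain \<delta> where \<delta>: "\<And>i0. i0 \<in> I \<Longrightarrow> \<delta> i0 > 0"
      "\<And>i0 c. i0 \<in> I \<Longrightarrow> (\<forall>i\<in>I-{i0}. c i \<in> KI) \<Longrightarrow> \<delta> i0 \<le> absv (z i0 + (\<Sum>i\<in>I-{i0}. c i * z i))"
      by metis
    define C where "C = Min (\<delta> ` I)"
    have Cpos: "C > 0" unfolding C_def using psubset.hyps False \<delta>(1) by (subst Min_gr_iff) auto
    have Cle: "C \<le> \<delta> i" if "i \<in> I" for i unfolding C_def using psubset.hyps that by simp
    show ?thesis
    proof (intro exI[of _ C] conjI allI impI ballI Cpos)
      fix c i assume c: "\<forall>i\<in>I. c i \<in> KI" and i: "i \<in> I"
      define M where "M = Max ((\<lambda>i. absv (c i)) ` I)"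
      have "M \<in> (\<lambda>i. absv (c i)) ` I" unfolding M_def using psubset.hyps False by (intro Max_in) auto
      then obtain i0 where i0: "i0 \<in> I" "M = absv (c i0)" by blast
      have imax: "absv (c j) \<le> absv (c i0)" if "j \<in> I" for j
        using psubset.hyps that i0(2) unfolding M_def by (metis Max_ge finite_imageI imageI)
      show "C * absv (c i) \<le> absv (\<Sum>i\<in>I. c i * z i)"
      proof (cases "c i0 = 0")
        case True
        hence "absv (c i) \<le> 0" using imax[OF i] by simp
        hence "c i = 0" using nonneg[of "c i"] zero_iff[of "c i"] by linarith
        thus ?thesis by simp
      next
        case False
        let ?c' = "\<lambda>j. c j / c i0"
        have "(\<Sum>i\<in>I. c i * z i) = c i0 * z i0 + (\<Sum>j\<in>I-{i0}. c j * z j)"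
          using sum.remove[OF psubset.hyps i0(1)] by simp
        also have "(\<Sum>j\<in>I-{i0}. c j * z j) = c i0 * (\<Sum>j\<in>I-{i0}. ?c' j * z j)"
          using False by (simp add: sum_distrib_left)
        finally have eq: "(\<Sum>i\<in>I. c i * z i) = c i0 * (z i0 + (\<Sum>j\<in>I-{i0}. ?c' j * z j))"
          by (simp add: distrib_left)
        have "\<forall>j\<in>I-{i0}. ?c' j \<in> KI" using c i0 by (auto intro: KI_divide)
        hence d: "\<delta> i0 \<le> absv (z i0 + (\<Sum>j\<in>I-{i0}. ?c' j * z j))" using \<delta>(2)[OF i0(1), of ?c'] by simp
        have "C * absv (c i) \<le> \<delta> i0 * absv (c i0)"
          using Cle[OF i0(1)] imax[OF i] Cpos by (intro mult_mono) auto
        also have "\<dots> \<le> absv (z i0 + (\<Sum>j\<in>I-{i0}. ?c' j * z j)) * absv (c i0)"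
          using d by (intro mult_right_mono) auto
        also have "\<dots> = absv (\<Sum>i\<in>I. c i * z i)" using eq by (simp add: mult.commute)
        finally show ?thesis .
      qed
    qed
  qed
qed


lemma tuples_finite_bound:
  assumes "finite I" "finite P"
  shows "finite {a::nat \<Rightarrow> 'c poly. (\<forall>i\<in>I. a i \<in> P) \<and> (\<forall>i. i \<notin> I \<longrightarrow> a i = 0)}"
proof -
  have "{a::nat \<Rightarrow> 'c poly. (\<forall>i\<in>I. a i \<in> P) \<and> (\<forall>i. i \<notin> I \<longrightarrow> a i = 0)}
        \<subseteq> (\<lambda>f i. if i \<in> I then f i else 0) ` (PiE I (\<lambda>_. P))"
  proof
    fix a :: "nat \<Rightarrow> 'c poly" assume a: "a \<in> {a. (\<forall>i\<in>I. a i \<in> P) \<and> (\<forall>i. i \<notin> I \<longrightarrow> a i = 0)}"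
    have "restrict a I \<in> PiE I (\<lambda>_. P)" using a by auto
    moreover have "a = (\<lambda>i. if i \<in> I then restrict a I i else 0)" using a by (auto simp: fun_eq_iff)
    ultimately show "a \<in> (\<lambda>f i. if i \<in> I then f i else 0) ` (PiE I (\<lambda>_. P))" by blast
  qed
  moreover have "finite (PiE I (\<lambda>_. P))" using assms by (intro finite_PiE) auto
  ultimately show ?thesis using finite_subset by blast
qed

lemma lattice_finite:
  assumes "finite I" "lin_indep_over KI I z"
  shows "finite {a \<in> tuples q I. absv (\<Sum>i\<in>I. poly (a i) \<theta> * z i) \<le> M}"
proof -
  obtain C where C: "C > 0" "\<forall>c. (\<forall>i\<in>I. c i \<in> KI) \<longrightarrow> (\<forall>i\<in>I. C * absv (c i) \<le> absv (\<Sum>i\<in>I. c i * z i))"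
    using lower_bound[OF assms] by blast
  let ?P = "{a \<in> Apoly q. absv (poly a \<theta>) \<le> M / C}"
  have "{a \<in> tuples q I. absv (\<Sum>i\<in>I. poly (a i) \<theta> * z i) \<le> M}
        \<subseteq> {a. (\<forall>i\<in>I. a i \<in> ?P) \<and> (\<forall>i. i \<notin> I \<longrightarrow> a i = 0)}"
  proof safe
    fix a i assume a: "a \<in> tuples q I" "absv (\<Sum>i\<in>I. poly (a i) \<theta> * z i) \<le> M"
    { assume i: "i \<in> I"
      have Ai: "\<forall>i\<in>I. a i \<in> Apoly q" using a(1) by (simp add: tuples_def)
      have "\<forall>i\<in>I. poly (a i) \<theta> \<in> KI" using Ai by (simp add: KI_poly)
      hence "C * absv (poly (a i) \<theta>) \<le> M" using C(2) i a(2) by force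
      hence "absv (poly (a i) \<theta>) \<le> M / C" using C(1) by (simp add: field_simps)
      thus "a i \<in> Apoly q" "absv (poly (a i) \<theta>) \<le> M / C" using Ai i by auto }
    { assume "i \<notin> I" thus "a i = 0" using a(1) by (simp add: tuples_def) }
  qed
  moreover have "finite {a. (\<forall>i\<in>I. a i \<in> ?P) \<and> (\<forall>i. i \<notin> I \<longrightarrow> a i = 0)}"
    using assms(1) Apoly_abs_finite by (intro tuples_finite_bound) auto
  ultimately show ?thesis using finite_subset by blast
qed

lemma has_sumD:
  assumes "abs_has_sum absv f S s" "\<epsilon> > 0"
  obtains F0 where "finite F0" "F0 \<subseteq> S" "\<And>F. finite F \<Longrightarrow> F0 \<subseteq> F \<Longrightarrow> F \<subseteq> S \<Longrightarrow> absv (sum f F - s) < \<epsilon>"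
proof -
  have "\<exists>F0. finite F0 \<and> F0 \<subseteq> S \<and> (\<forall>F. finite F \<and> F0 \<subseteq> F \<and> F \<subseteq> S \<longrightarrow> absv (sum f F - s) < \<epsilon>)"
    using assms unfolding abs_has_sum_def by simp
  then obtain F0 where "finite F0 \<and> F0 \<subseteq> S \<and> (\<forall>F. finite F \<and> F0 \<subseteq> F \<and> F \<subseteq> S \<longrightarrow> absv (sum f F - s) < \<epsilon>)"
    by (elim exE)
  hence a: "finite F0" "F0 \<subseteq> S" and b: "\<And>F. finite F \<Longrightarrow> F0 \<subseteq> F \<Longrightarrow> F \<subseteq> S \<Longrightarrow> absv (sum f F - s) < \<epsilon>"
    by auto
  show ?thesis using a b by (rule that)
qed

lemma has_sum_unique:
  assumes "abs_has_sum absv f S s" "abs_has_sum absv f S s'" shows "s = s'"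
proof (rule ccontr)
  assume ne: "s \<noteq> s'"
  define \<epsilon> where "\<epsilon> = absv (s - s')"
  have e: "\<epsilon> > 0" using ne by (simp add: \<epsilon>_def)
  obtain F1 where F1: "finite F1" "F1 \<subseteq> S" "\<And>F. finite F \<Longrightarrow> F1 \<subseteq> F \<Longrightarrow> F \<subseteq> S \<Longrightarrow> absv (sum f F - s) < \<epsilon>"
    by (rule has_sumD[OF assms(1) e], rule that)
  obtain F2 where F2: "finite F2" "F2 \<subseteq> S" "\<And>F. finite F \<Longrightarrow> F2 \<subseteq> F \<Longrightarrow> F \<subseteq> S \<Longrightarrow> absv (sum f F - s') < \<epsilon>"
    by (rule has_sumD[OF assms(2) e], rule that)
  have u: "finite (F1 \<union> F2)" "F1 \<subseteq> F1 \<union> F2" "F2 \<subseteq> F1 \<union> F2" "F1 \<union> F2 \<subseteq> S"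
    using F1(1,2) F2(1,2) by auto
  have a: "absv (sum f (F1 \<union> F2) - s) < \<epsilon>" "absv (sum f (F1 \<union> F2) - s') < \<epsilon>"
    using F1(3)[of "F1 \<union> F2"] F2(3)[of "F1 \<union> F2"] u by simp_all
  have "absv (s - s') \<le> max (absv (s - sum f (F1 \<union> F2))) (absv (sum f (F1 \<union> F2) - s'))"
    by (rule adiff3)
  moreover have "absv (s - sum f (F1 \<union> F2)) = absv (sum f (F1 \<union> F2) - s)" by (rule adiff_sym)
  ultimately have "absv (s - s') < \<epsilon>" using a by linarith
  thus False by (simp add: \<epsilon>_def)
qed

lemma infsum_eq: "abs_has_sum absv f S s \<Longrightarrow> abs_infsum absv f S = s"
  unfolding abs_infsum_def by (rule the_equality) (auto intro: has_sum_unique)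

lemma has_sum_bound:
  assumes "abs_has_sum absv f S s" "\<And>x. x \<in> S \<Longrightarrow> absv (f x) \<le> B" "0 \<le> B"
  shows "absv s \<le> B"
proof (rule ccontr)
  assume "\<not> absv s \<le> B"
  hence sB: "absv s > B" by simp
  have "absv s > 0" using sB assms(3) by linarith
  obtain F0 where F0: "finite F0" "F0 \<subseteq> S" "\<And>F. finite F \<Longrightarrow> F0 \<subseteq> F \<Longrightarrow> F \<subseteq> S \<Longrightarrow> absv (sum f F - s) < absv s"
    by (rule has_sumD[OF assms(1) \<open>absv s > 0\<close>], rule that)
  have F: "finite F0" "F0 \<subseteq> S" "absv (sum f F0 - s) < absv s" using F0 by auto
  have "absv (sum f F0) \<le> B" using F assms by (intro asum_le) auto
  moreover have "absv s \<le> max (absv (s - sum f F0)) (absv (sum f F0))"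
    using ultra[of "s - sum f F0" "sum f F0"] by simp
  moreover have "absv (s - sum f F0) = absv (sum f F0 - s)" by (rule adiff_sym)
  ultimately show False using F(3) sB by linarith
qed

lemma has_sum_cong:
  assumes "abs_has_sum absv f S s" "\<And>x. x \<in> S \<Longrightarrow> f x = g x"
  shows "abs_has_sum absv g S s"
  unfolding abs_has_sum_def
proof safe
  fix \<epsilon> :: real assume e: "\<epsilon> > 0"
  obtain F0 where F0: "finite F0" "F0 \<subseteq> S" "\<And>F. finite F \<Longrightarrow> F0 \<subseteq> F \<Longrightarrow> F \<subseteq> S \<Longrightarrow> absv (sum f F - s) < \<epsilon>"
    by (rule has_sumD[OF assms(1) e], rule that)
  show "\<exists>F0. finite F0 \<and> F0 \<subseteq> S \<and> (\<forall>F. finite F \<and> F0 \<subseteq> F \<and> F \<subseteq> S \<longrightarrow> absv (sum g F - s) < \<epsilon>)"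
  proof (intro exI[of _ F0] conjI allI impI F0(1,2))
    fix F assume F: "finite F \<and> F0 \<subseteq> F \<and> F \<subseteq> S"
    hence "sum g F = sum f F" using assms(2) by (intro sum.cong) auto
    thus "absv (sum g F - s) < \<epsilon>" using F0(3)[of F] F by simp
  qed
qed

lemma has_sum_union:
  assumes "abs_has_sum absv f S1 s1" "abs_has_sum absv f S2 s2" "S1 \<inter> S2 = {}"
  shows "abs_has_sum absv f (S1 \<union> S2) (s1 + s2)"
  unfolding abs_has_sum_def
proof safe
  fix \<epsilon> :: real assume e: "\<epsilon> > 0"
  obtain F1 where F1: "finite F1" "F1 \<subseteq> S1" "\<And>F. finite F \<Longrightarrow> F1 \<subseteq> F \<Longrightarrow> F \<subseteq> S1 \<Longrightarrow> absv (sum f F - s1) < \<epsilon>"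
    by (rule has_sumD[OF assms(1) e], rule that)
  obtain F2 where F2: "finite F2" "F2 \<subseteq> S2" "\<And>F. finite F \<Longrightarrow> F2 \<subseteq> F \<Longrightarrow> F \<subseteq> S2 \<Longrightarrow> absv (sum f F - s2) < \<epsilon>"
    by (rule has_sumD[OF assms(2) e], rule that)
  show "\<exists>F0. finite F0 \<and> F0 \<subseteq> S1 \<union> S2 \<and> (\<forall>F. finite F \<and> F0 \<subseteq> F \<and> F \<subseteq> S1 \<union> S2 \<longrightarrow> absv (sum f F - (s1 + s2)) < \<epsilon>)"
  proof (intro exI[of _ "F1 \<union> F2"] conjI allI impI)
    show "finite (F1 \<union> F2)" "F1 \<union> F2 \<subseteq> S1 \<union> S2" using F1 F2 by auto
    fix F assume F: "finite F \<and> F1 \<union> F2 \<subseteq> F \<and> F \<subseteq> S1 \<union> S2"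
    have FF: "F = (F \<inter> S1) \<union> (F \<inter> S2)" using F by blast
    have "sum f ((F \<inter> S1) \<union> (F \<inter> S2)) = sum f (F \<inter> S1) + sum f (F \<inter> S2)"
      by (rule sum.union_disjoint) (use F assms(3) in auto)
    hence "sum f F = sum f (F \<inter> S1) + sum f (F \<inter> S2)" using FF by simp
    moreover have "absv (sum f (F \<inter> S1) - s1) < \<epsilon>" using F F1(2) by (intro F1(3)) auto
    moreover have "absv (sum f (F \<inter> S2) - s2) < \<epsilon>" using F F2(2) by (intro F2(3)) auto
    ultimately show "absv (sum f F - (s1 + s2)) < \<epsilon>"
      using ultra[of "sum f (F \<inter> S1) - s1" "sum f (F \<inter> S2) - s2"] by (simp add: algebra_simps)
  qed
qed

lemma sum_criterion:
  assumes fin: "\<And>\<epsilon>. \<epsilon> > 0 \<Longrightarrow> finite {x \<in> S. \<epsilon> \<le> absv (f x)}"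
  shows "\<exists>s. abs_has_sum absv f S s"
proof -
  define F where "F n = {x \<in> S. 1 / real (Suc n) \<le> absv (f x)}" for n
  have Ffin: "finite (F n)" for n unfolding F_def by (rule fin) simp
  have Fmono: "F n \<subseteq> F m" if "n \<le> m" for n m
  proof -
    have "1 / real (Suc m) \<le> 1 / real (Suc n)" using that by (simp add: frac_le)
    thus ?thesis unfolding F_def by auto
  qed
  have small: "absv (sum f G) < 1 / real (Suc n)" if "finite G" "G \<subseteq> S" "G \<inter> F n = {}" for G n
  proof (rule asum_lt[OF that(1)])
    fix x assume "x \<in> G"
    thus "absv (f x) < 1 / real (Suc n)" using that unfolding F_def by force
  qed simp
  define sn where "sn n = sum f (F n)" for n
  have step: "absv (sn m - sn n) < 1 / real (Suc n)" if "n \<le> m" for n m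
  proof -
    have "sn m = sum f (F n) + sum f (F m - F n)" unfolding sn_def
      using sum.subset_diff[OF Fmono[OF that] Ffin[of m]] by (simp add: add.commute)
    moreover have "absv (sum f (F m - F n)) < 1 / real (Suc n)"
      by (rule small) (use Ffin in \<open>auto simp: F_def\<close>)
    ultimately show ?thesis by (simp add: sn_def)
  qed
  have "\<exists>L. \<forall>\<epsilon>>0. \<exists>N. \<forall>n\<ge>N. absv (sn n - L) < \<epsilon>"
  proof (rule complete, safe)
    fix \<epsilon> :: real assume e: "\<epsilon> > 0"
    obtain N :: nat where N: "1 / \<epsilon> < N" using reals_Archimedean2 by blast
    have Ne: "1 / real (Suc N) < \<epsilon>"
    proof -
      have "1 / \<epsilon> < Suc N" using N by simp
      thus ?thesis using e by (simp add: field_simps)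
    qed
    show "\<exists>N. \<forall>m\<ge>N. \<forall>n\<ge>N. absv (sn m - sn n) < \<epsilon>"
    proof (intro exI[of _ N] allI impI)
      fix m n assume "N \<le> m" "N \<le> n"
      hence "absv (sn m - sn N) < 1 / real (Suc N)" "absv (sn n - sn N) < 1 / real (Suc N)"
        using step by auto
      moreover have "absv (sn m - sn n) \<le> max (absv (sn m - sn N)) (absv (sn N - sn n))" by (rule adiff3)
      ultimately show "absv (sn m - sn n) < \<epsilon>" using Ne adiff_sym[of "sn N" "sn n"] by simp
    qed
  qed
  then obtain L where L: "\<And>\<epsilon>. \<epsilon> > 0 \<Longrightarrow> \<exists>N. \<forall>n\<ge>N. absv (sn n - L) < \<epsilon>" by blast
  have "abs_has_sum absv f S L"
    unfolding abs_has_sum_def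
  proof safe
    fix \<epsilon> :: real assume e: "\<epsilon> > 0"
    obtain N1 where N1: "\<forall>n\<ge>N1. absv (sn n - L) < \<epsilon>" using L e by blast
    obtain N2 :: nat where N2: "1 / \<epsilon> < N2" using reals_Archimedean2 by blast
    define n where "n = max N1 N2"
    have ne: "1 / real (Suc n) < \<epsilon>"
    proof -
      have "1 / \<epsilon> < Suc n" using N2 unfolding n_def by linarith
      thus ?thesis using e by (simp add: field_simps)
    qed
    have snL: "absv (sn n - L) < \<epsilon>" using N1 unfolding n_def by simp
    show "\<exists>F0. finite F0 \<and> F0 \<subseteq> S \<and> (\<forall>G. finite G \<and> F0 \<subseteq> G \<and> G \<subseteq> S \<longrightarrow> absv (sum f G - L) < \<epsilon>)"
    proof (intro exI[of _ "F n"] conjI allI impI Ffin)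
      show "F n \<subseteq> S" unfolding F_def by auto
      fix G assume G: "finite G \<and> F n \<subseteq> G \<and> G \<subseteq> S"
      have "sum f G = sn n + sum f (G - F n)" unfolding sn_def
        using sum.subset_diff[of "F n" G f] G by (simp add: add.commute)
      moreover have "absv (sum f (G - F n)) < 1 / real (Suc n)"
        by (rule small) (use G in auto)
      ultimately show "absv (sum f G - L) < \<epsilon>"
        using ultra[of "sum f (G - F n)" "sn n - L"] snL ne by (simp add: algebra_simps)
    qed
  qed
  thus ?thesis by blast
qed


lemma tuples_Apoly: "a \<in> tuples q I \<Longrightarrow> (a j :: 'c poly) \<in> Apoly q"
  unfolding tuples_def by (cases "j \<in> I") auto

lemma term_small:
  assumes t: "absv t \<le> 1" and a: "a \<in> tuples q I" and e: "\<epsilon> > 0"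
    and le: "\<epsilon> \<le> absv (poly (a j) t / D ^ N)" and N: "N > 0"
  shows "absv D \<le> max 1 (1 / \<epsilon>)"
proof (cases "absv D \<le> 1")
  case True thus ?thesis by simp
next
  case False
  have num: "absv (poly (a j) t) \<le> 1" using Apoly_le1[OF tuples_Apoly[OF a] t] .
  have "absv D > 0" using False by linarith
  hence Dp: "absv D ^ N > 0" by (rule zero_less_power)
  have "\<epsilon> \<le> absv (poly (a j) t) / absv D ^ N" using le by simp
  also have "\<dots> \<le> 1 / absv D ^ N" using num Dp by (intro divide_right_mono) auto
  finally have "\<epsilon> * absv D ^ N \<le> 1" using Dp by (simp add: le_divide_eq)
  moreover have "absv D \<le> absv D ^ N" using False N
    by (metis One_nat_def Suc_leI linorder_not_le less_imp_le power_increasing power_one_right)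
  ultimately have "\<epsilon> * absv D \<le> 1" using e by (smt (verit) mult_left_mono)
  hence "absv D \<le> 1 / \<epsilon>" using e by (simp add: field_simps)
  thus ?thesis by simp
qed

lemma lattice_summable:
  assumes I: "finite I" "lin_indep_over KI I z" and t: "absv t \<le> 1"
    and S: "S \<subseteq> tuples q I" and N: "N > 0"
  shows "\<exists>s. abs_has_sum absv (\<lambda>a. poly (a j) t / (\<Sum>i\<in>I. poly (a i) \<theta> * z i) ^ N) S s"
proof (rule sum_criterion)
  fix \<epsilon> :: real assume e: "\<epsilon> > 0"
  have "{a \<in> S. \<epsilon> \<le> absv (poly (a j) t / (\<Sum>i\<in>I. poly (a i) \<theta> * z i) ^ N)}
      \<subseteq> {a \<in> tuples q I. absv (\<Sum>i\<in>I. poly (a i) \<theta> * z i) \<le> max 1 (1 / \<epsilon>)}"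
    using S term_small[OF t _ e _ N] by blast
  moreover have "finite {a \<in> tuples q I. absv (\<Sum>i\<in>I. poly (a i) \<theta> * z i) \<le> max 1 (1 / \<epsilon>)}"
    by (rule lattice_finite[OF I])
  ultimately show "finite {a \<in> S. \<epsilon> \<le> absv (poly (a j) t / (\<Sum>i\<in>I. poly (a i) \<theta> * z i) ^ N)}"
    using finite_subset by blast
qed

end
theorem proposition3p9:
  fixes q :: nat and \<theta> :: "'c::field" and absv :: "'c \<Rightarrow> real"
    and r j k :: nat and zt :: "nat \<Rightarrow> 'c" and t :: 'c
  assumes Cinf: "Cinf_setup q \<theta> absv"
    and r: "r \<ge> 2"
    and zt_Omega: "lin_indep_over (Kinf absv q \<theta>) {2..r} zt" "zt r = 1"
    and j: "2 \<le> j" "j \<le> r"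
    and t: "absv t \<le> 1"
  shows "\<exists>L. abs_has_sum absv
              (\<lambda>a. poly (a j) t / (\<Sum>i\<in>{2..r}. poly (a i) \<theta> * zt i) ^ (q ^ k))
              (tuples q {2..r}) L
          \<and> (\<forall>z1. lin_indep_over (Kinf absv q \<theta>) {1..r} (zt(1 := z1))
                  \<longrightarrow> (\<exists>s. abs_has_sum absv
                        (\<lambda>a. poly (a j) t / (\<Sum>i\<in>{1..r}. poly (a i) \<theta> * (zt(1 := z1)) i) ^ (q ^ k))
                        (tuples q {1..r}) s))
          \<and> (\<forall>\<epsilon>>0. \<exists>R. \<forall>z1. lin_indep_over (Kinf absv q \<theta>) {1..r} (zt(1 := z1))
                  \<and> absv z1 = imag_abs absv (Kinf absv q \<theta>) r z1 zt \<and> absv z1 > R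
                  \<longrightarrow> absv (abs_infsum absv
                        (\<lambda>a. poly (a j) t / (\<Sum>i\<in>{1..r}. poly (a i) \<theta> * (zt(1 := z1)) i) ^ (q ^ k))
                        (tuples q {1..r}) - L) < \<epsilon>)"
proof -
  interpret cinf q \<theta> absv by unfold_locales (rule Cinf)
  have N: "q ^ k > 0" using q_pos by simp
  define T2 where "T2 = (tuples q {2..r} :: (nat \<Rightarrow> 'c poly) set)"
  define T1 where "T1 = (tuples q {1..r} :: (nat \<Rightarrow> 'c poly) set)"
  define g where "g = (\<lambda>a. poly (a j) t / (\<Sum>i\<in>{2..r}. poly (a i) \<theta> * zt i) ^ (q ^ k))"
  have "\<exists>L. abs_has_sum absv g T2 L" unfolding g_def T2_def
    by (rule lattice_summable[OF _ zt_Omega(1) t _ N]) auto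
  then obtain L where L: "abs_has_sum absv g T2 L" by (elim exE)
  have part2: "\<forall>z1. lin_indep_over (Kinf absv q \<theta>) {1..r} (zt(1 := z1))
                  \<longrightarrow> (\<exists>s. abs_has_sum absv
                        (\<lambda>a. poly (a j) t / (\<Sum>i\<in>{1..r}. poly (a i) \<theta> * (zt(1 := z1)) i) ^ (q ^ k))
                        (tuples q {1..r}) s)"
  proof (intro allI impI)
    fix z1 assume h: "lin_indep_over (Kinf absv q \<theta>) {1..r} (zt(1 := z1))"
    show "\<exists>s. abs_has_sum absv
                        (\<lambda>a. poly (a j) t / (\<Sum>i\<in>{1..r}. poly (a i) \<theta> * (zt(1 := z1)) i) ^ (q ^ k))
                        (tuples q {1..r}) s"
      by (rule lattice_summable[OF _ h t _ N]) auto
  qed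
  have T12: "T1 = T2 \<union> {a \<in> T1. a 1 \<noteq> 0}" "T2 \<inter> {a \<in> T1. a 1 \<noteq> 0} = {}"
  proof -
    have A: "a \<in> T2 \<longleftrightarrow> a \<in> T1 \<and> a 1 = 0" for a
    proof
      assume a: "a \<in> T2"
      hence "a 1 = 0" by (simp add: T2_def tuples_def)
      thus "a \<in> T1 \<and> a 1 = 0" using a by (auto simp: T1_def T2_def tuples_def)
    next
      assume a: "a \<in> T1 \<and> a 1 = 0"
      show "a \<in> T2" unfolding T2_def tuples_def
      proof (intro CollectI conjI allI impI ballI)
        fix i assume "i \<in> {2..r}" thus "a i \<in> Apoly q" using a by (auto simp: T1_def tuples_def)
      next
        fix i assume "i \<notin> {2..r}"
        thus "a i = 0" using a by (cases "i = 1") (auto simp: T1_def tuples_def)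
      next
        obtain i where "i \<in> {1..r}" "a i \<noteq> 0" using a by (auto simp: T1_def tuples_def)
        moreover have "i \<noteq> 1" using a \<open>a i \<noteq> 0\<close> by auto
        ultimately show "\<exists>i\<in>{2..r}. a i \<noteq> 0" by (intro bexI[of _ i]) auto
      qed
    qed
    show "T1 = T2 \<union> {a \<in> T1. a 1 \<noteq> 0}" "T2 \<inter> {a \<in> T1. a 1 \<noteq> 0} = {}" using A by auto
  qed
  have part3: "\<forall>\<epsilon>>0. \<exists>R. \<forall>z1. lin_indep_over (Kinf absv q \<theta>) {1..r} (zt(1 := z1))
                  \<and> absv z1 = imag_abs absv (Kinf absv q \<theta>) r z1 zt \<and> absv z1 > R
                  \<longrightarrow> absv (abs_infsum absv
                        (\<lambda>a. poly (a j) t / (\<Sum>i\<in>{1..r}. poly (a i) \<theta> * (zt(1 := z1)) i) ^ (q ^ k))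
                        (tuples q {1..r}) - L) < \<epsilon>"
  proof (intro allI impI)
    fix \<epsilon> :: real assume e: "\<epsilon> > 0"
    show "\<exists>R. \<forall>z1. lin_indep_over (Kinf absv q \<theta>) {1..r} (zt(1 := z1))
                  \<and> absv z1 = imag_abs absv (Kinf absv q \<theta>) r z1 zt \<and> absv z1 > R
                  \<longrightarrow> absv (abs_infsum absv
                        (\<lambda>a. poly (a j) t / (\<Sum>i\<in>{1..r}. poly (a i) \<theta> * (zt(1 := z1)) i) ^ (q ^ k))
                        (tuples q {1..r}) - L) < \<epsilon>"
    proof (intro exI[of _ "max 1 (1 / \<epsilon>)"] allI impI)
      fix z1 assume h: "lin_indep_over (Kinf absv q \<theta>) {1..r} (zt(1 := z1))
                  \<and> absv z1 = imag_abs absv (Kinf absv q \<theta>) r z1 zt \<and> absv z1 > max 1 (1 / \<epsilon>)"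
      define z' where "z' = zt(1 := z1)"
      define f where "f = (\<lambda>a. poly (a j) t / (\<Sum>i\<in>{1..r}. poly (a i) \<theta> * z' i) ^ (q ^ k))"
      define S1 where "S1 = {a \<in> T1. a 1 \<noteq> 0}"
      have z1big: "absv z1 > 1" "absv z1 > 1 / \<epsilon>" using h by auto
      have sum1: "(\<Sum>i\<in>{1..r}. poly (a i) \<theta> * z' i) = poly (a 1) \<theta> * z1 + (\<Sum>i\<in>{2..r}. poly (a i) \<theta> * zt i)" for a
      proof -
        have "{1..r} = insert 1 {2..r}" using r by auto
        hence "(\<Sum>i\<in>{1..r}. poly (a i) \<theta> * z' i) = poly (a 1) \<theta> * z' 1 + (\<Sum>i\<in>{2..r}. poly (a i) \<theta> * z' i)"
          by simp
        also have "(\<Sum>i\<in>{2..r}. poly (a i) \<theta> * z' i) = (\<Sum>i\<in>{2..r}. poly (a i) \<theta> * zt i)"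
          by (rule sum.cong) (auto simp: z'_def)
        finally show ?thesis by (simp add: z'_def)
      qed
      have fg: "f a = g a" if "a \<in> T2" for a
      proof -
        have "a 1 = 0" using that by (simp add: T2_def tuples_def)
        thus ?thesis unfolding f_def g_def using sum1[of a] by simp
      qed
      have L1: "abs_has_sum absv f T2 L" by (rule has_sum_cong[OF L]) (simp add: fg)
      have hz': "lin_indep_over KI {1..r} z'" unfolding z'_def using h by blast
      have "\<exists>s1. abs_has_sum absv f S1 s1" unfolding f_def
        by (rule lattice_summable[OF _ hz' t _ N]) (auto simp: S1_def T1_def)
      then obtain s1 where s1: "abs_has_sum absv f S1 s1" by (elim exE)
      have bnd: "absv (f a) \<le> 1 / absv z1 ^ (q ^ k)" if a: "a \<in> S1" for a
      proof -
        define b where "b = poly (a 1) \<theta>"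
        have a1: "a 1 \<in> Apoly q" "a 1 \<noteq> 0" using a by (auto simp: S1_def T1_def tuples_def)
        have b: "absv b \<ge> 1" "b \<noteq> 0" using Apoly_theta_ge1[OF a1] Apoly_theta_nz[OF a1] by (auto simp: b_def)
        define c where "c i = - (poly (a i) \<theta> / b)" for i
        have cK: "\<forall>i\<in>{2..r}. c i \<in> KI"
        proof
          fix i assume "i \<in> {2..r}"
          have "a i \<in> Apoly q" using a by (intro tuples_Apoly) (auto simp: S1_def T1_def)
          thus "c i \<in> KI" unfolding c_def b_def using a1 by (intro KI_minus KI_divide KI_poly)
        qed
        define D where "D = (\<Sum>i\<in>{1..r}. poly (a i) \<theta> * z' i)"
        have "D = b * (z1 - (\<Sum>i\<in>{2..r}. c i * zt i))"
          unfolding D_def sum1 using b(2)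
          by (simp add: c_def b_def algebra_simps sum_distrib_left sum_negf)
        hence aD: "absv D = absv b * absv (z1 - (\<Sum>i\<in>{2..r}. c i * zt i))" by simp
        have "imag_abs absv KI r z1 zt \<le> absv (z1 - (\<Sum>i\<in>{2..r}. c i * zt i))"
          unfolding imag_abs_def
        proof (rule cInf_lower)
          show "absv (z1 - (\<Sum>i\<in>{2..r}. c i * zt i)) \<in> {absv (z1 - (\<Sum>i\<in>{2..r}. c i * zt i)) |c. \<forall>i\<in>{2..r}. c i \<in> KI}"
            by (rule CollectI, rule exI[of _ c]) (simp add: cK)
          show "bdd_below {absv (z1 - (\<Sum>i\<in>{2..r}. c i * zt i)) |c. \<forall>i\<in>{2..r}. c i \<in> KI}"
            by (rule bdd_belowI[of _ 0]) auto
        qed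
        hence "absv z1 \<le> absv (z1 - (\<Sum>i\<in>{2..r}. c i * zt i))" using h by simp
        also have "\<dots> \<le> absv D"
        proof -
          have "1 * absv (z1 - (\<Sum>i\<in>{2..r}. c i * zt i)) \<le> absv b * absv (z1 - (\<Sum>i\<in>{2..r}. c i * zt i))"
            using b(1) by (intro mult_right_mono) auto
          thus ?thesis unfolding aD by simp
        qed
        finally have z1D: "absv z1 \<le> absv D" .
        have z1p: "absv z1 > 0" using z1big by linarith
        have aj: "a j \<in> Apoly q" using a unfolding S1_def T1_def by (intro tuples_Apoly) auto
        have "absv (f a) = absv (poly (a j) t) / absv D ^ (q ^ k)" by (simp add: f_def D_def)
        also have "\<dots> \<le> 1 / absv D ^ (q ^ k)"
          using Apoly_le1[OF aj t] by (intro divide_right_mono) auto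
        also have "\<dots> \<le> 1 / absv z1 ^ (q ^ k)"
        proof -
          have p1: "absv z1 ^ (q ^ k) \<le> absv D ^ (q ^ k)" by (rule power_mono[OF z1D]) simp
          have p2: "absv z1 ^ (q ^ k) > 0" using z1p by simp
          hence "absv D ^ (q ^ k) > 0" using p1 by linarith
          hence "0 < absv D ^ (q ^ k) * absv z1 ^ (q ^ k)" using p2 by simp
          thus ?thesis using p1 by (intro divide_left_mono) auto
        qed
        finally show ?thesis .
      qed
      have sb: "absv s1 \<le> 1 / absv z1 ^ (q ^ k)" using has_sum_bound[OF s1 bnd] by simp
      have "absv z1 ^ 1 \<le> absv z1 ^ (q ^ k)" using z1big N
        by (intro power_increasing) auto
      hence "absv z1 \<le> absv z1 ^ (q ^ k)" by simp
      moreover have "0 < absv z1 ^ (q ^ k) * absv z1"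
        using z1big by (intro mult_pos_pos zero_less_power) auto
      ultimately have "1 / absv z1 ^ (q ^ k) \<le> 1 / absv z1"
        by (intro divide_left_mono) auto
      also have "1 / absv z1 < \<epsilon>"
      proof -
        have "1 < absv z1 * \<epsilon>" using z1big(2) e by (simp add: field_simps)
        moreover have "absv z1 > 0" using z1big by linarith
        ultimately show ?thesis by (simp add: pos_divide_less_eq mult.commute)
      qed
      finally have s1e: "absv s1 < \<epsilon>" using sb by linarith
      have "abs_has_sum absv f T1 (L + s1)"
        using has_sum_union[OF L1 s1] T12 unfolding S1_def by simp
      hence "abs_infsum absv f T1 = L + s1" by (rule infsum_eq)
      thus "absv (abs_infsum absv
                        (\<lambda>a. poly (a j) t / (\<Sum>i\<in>{1..r}. poly (a i) \<theta> * (zt(1 := z1)) i) ^ (q ^ k))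
                        (tuples q {1..r}) - L) < \<epsilon>"
        using s1e unfolding f_def z'_def T1_def by simp
    qed
  qed
  have L': "abs_has_sum absv
              (\<lambda>a. poly (a j) t / (\<Sum>i\<in>{2..r}. poly (a i) \<theta> * zt i) ^ (q ^ k))
              (tuples q {2..r}) L" using L unfolding g_def T2_def .
  show ?thesis by (intro exI[of _ L] conjI L' part2 part3)
qed

end
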